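(* There is an absolute constant $K$ such that the following holds. Let $(h(i))_{i\ge 0}$ be a Fibonacci-automatic sequence generated by a Fibonacci-DFAO with $m$ states, and let $c \ge 0$ be an integer. Then there is a Fibonacci-DFAO with at most $K m^2 (c+1)^2$ states generating the shifted sequence $(h(i+c))_{i \ge 0}$.
   Context: Fibonacci numbers $F_0=0,F_1=1,F_k=F_{k-1}+F_{k-2}$; for a binary word $x=x_1\cdots x_\ell$, $[x]=\sum_j x_j F_{\ell-j+2}$; a valid Fibonacci representation is a binary word with no factor $11$ (leading zeros allowed). A Fibonacci-DFAO is a deterministic finite automaton with output $(Q,\{0,1\},\delta,q_0,\Delta,\tau)$ (with $\tau: Q\to\Delta$ the output map and $\delta$ possibly partial) reading valid Fibonacci representations most significant digit first; it has a self-loop on $q_0$ under $0$, so its output does not depend on leading zeros. It generates the sequence $(h(i))_{i\ge0}$ if $h(i) = \tau(\delta(q_0,x))$ for every valid representation $x$ with $[x]=i$. A sequence is Fibonacci-automatic if it is generated by some Fibonacci-DFAO. *)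

theory Defs
  imports "HOL-Number_Theory.Fib"
begin

text \<open>Binary words are bool lists (True = digit 1), read most significant digit first.
  fib_val x = sum_j x_j F_(l-j+2) with 1-based j; here j is 0-based.\<close>
definition fib_val :: "bool list \<Rightarrow> nat" where
  "fib_val x = (\<Sum>j<length x. if x ! j then fib (length x - j + 1) else 0)"

definition fib_valid :: "bool list \<Rightarrow> bool" where
  "fib_valid x \<longleftrightarrow> (\<forall>j. Suc j < length x \<longrightarrow> \<not> (x ! j \<and> x ! Suc j))"

fun run :: "('q \<Rightarrow> bool \<Rightarrow> 'q option) \<Rightarrow> 'q \<Rightarrow> bool list \<Rightarrow> 'q option" where
  "run \<delta> q [] = Some q"
| "run \<delta> q (a # w) = (case \<delta> q a of None \<Rightarrow> None | Some q' \<Rightarrow> run \<delta> q' w)"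

definition fib_dfao :: "'q set \<Rightarrow> ('q \<Rightarrow> bool \<Rightarrow> 'q option) \<Rightarrow> 'q \<Rightarrow> bool" where
  "fib_dfao Q \<delta> q0 \<longleftrightarrow> finite Q \<and> q0 \<in> Q
     \<and> (\<forall>q\<in>Q. \<forall>a q'. \<delta> q a = Some q' \<longrightarrow> q' \<in> Q)
     \<and> \<delta> q0 False = Some q0"

definition generates ::
  "('q \<Rightarrow> bool \<Rightarrow> 'q option) \<Rightarrow> 'q \<Rightarrow> ('q \<Rightarrow> 'o) \<Rightarrow> (nat \<Rightarrow> 'o) \<Rightarrow> bool" where
  "generates \<delta> q0 \<tau> h \<longleftrightarrow>
     (\<forall>x. fib_valid x \<longrightarrow> (\<exists>q. run \<delta> q0 x = Some q \<and> \<tau> q = h (fib_val x)))"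

end

theory Submission
  imports Defs
begin


lemma fib_val_Nil[simp]: "fib_val [] = 0"
  by (simp add: fib_val_def)

lemma fib_val_Cons[simp]: "fib_val (b # w) = (if b then fib (length w + 2) else 0) + fib_val w"
proof -
  have "fib_val (b # w) = (\<Sum>j<Suc (length w). if (b#w) ! j then fib (Suc (length w) - j + 1) else 0)"
    by (simp only: fib_val_def length_Cons)
  also have "\<dots> = (if b then fib (length w + 2) else 0) + (\<Sum>j<length w. if w ! j then fib (length w - j + 1) else 0)"
    by (subst sum.lessThan_Suc_shift) (auto intro!: sum.cong)
  finally show ?thesis by (simp add: fib_val_def)
qed

lemma fib_valid_Nil[simp]: "fib_valid []" and fib_valid_single[simp]: "fib_valid [x]"
  by (auto simp: fib_valid_def)

lemma fib_valid_Cons2[simp]: "fib_valid (x # y # w) \<longleftrightarrow> \<not> (x \<and> y) \<and> fib_valid (y # w)"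
  unfolding fib_valid_def
  apply (rule iffI)
   apply (intro conjI allI impI)
    apply (drule spec[of _ 0], simp)
  subgoal for j by (drule spec[of _ "Suc j"]) simp
  apply (intro allI impI)
  subgoal for j by (cases j) auto
  done

lemma fib_valid_tl: "fib_valid (y # w) \<Longrightarrow> fib_valid w"
  by (cases w) auto

lemma fib_valid_False_Cons[simp]: "fib_valid (False # w) = fib_valid w"
  by (cases w) auto

lemma fib_valid_True_Cons: "fib_valid (True # w) \<longleftrightarrow> (w = [] \<or> (hd w = False \<and> fib_valid (tl w)))"
  by (cases w) auto

lemma fib_valid_append:
  "fib_valid (a @ b) \<longleftrightarrow> fib_valid a \<and> fib_valid b \<and> (a \<noteq> [] \<and> b \<noteq> [] \<longrightarrow> \<not> (last a \<and> hd b))"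
proof (induction a)
  case Nil then show ?case by simp
next
  case (Cons x a)
  show ?case
  proof (cases a)
    case Nil then show ?thesis by (cases b) auto
  next
    case (Cons y a') then show ?thesis using Cons.IH by auto
  qed
qed

lemma fib_val_replicate_False[simp]: "fib_val (replicate n False @ w) = fib_val w"
  by (induction n) auto

lemma fib_valid_replicate_False[simp]: "fib_valid (replicate n False @ w) = fib_valid w"
  by (induction n) auto

lemma fib_val_append: "fib_val (a @ w) = fib_val (a @ replicate (length w) False) + fib_val w"
proof (induction a)
  case Nil
  have "fib_val (replicate (length w) False) = 0"
    using fib_val_replicate_False[of "length w" "[]"] by simp
  then show ?case by simp
next
  case (Cons x a) then show ?case by simp
qed

lemma fib_valid_bound: "fib_valid w \<Longrightarrow> fib_val w < fib (length w + 2)"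
proof (induction w rule: induct_list012)
  case 1 then show ?case by simp
next
  case (2 x) then show ?case by (simp add: numeral_3_eq_3)
next
  case (3 x y w)
  have vyw: "fib_valid (y # w)" and vw: "fib_valid w" using 3(3) fib_valid_tl by auto
  have i2: "fib_val (y # w) < fib (length w + 3)" using 3(2)[OF vyw] by (simp add: numeral_eq_Suc)
  have i1: "fib_val w < fib (length w + 2)" using 3(1)[OF vw] .
  have f4: "fib (length w + 4) = fib (length w + 3) + fib (length w + 2)"
    using fib_plus_2[of "length w + 2"] by (simp add: add.assoc numeral_eq_Suc)
  have m: "fib (length w + 3) \<le> fib (length w + 4)" by (rule fib_mono) simp
  show ?case
  proof (cases x)
    case True
    then have "\<not> y" using 3(3) by simp
    then have "fib_val (x # y # w) = fib (length w + 3) + fib_val w" using True by (simp add: numeral_eq_Suc)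
    then show ?thesis using i1 f4 by (simp add: numeral_eq_Suc)
  next
    case False
    then have "fib_val (x # y # w) = fib_val (y # w)" by simp
    then show ?thesis using i2 m by (simp add: numeral_eq_Suc)
  qed
qed

lemma fib_valid_bound0: "fib_valid (False # w) \<Longrightarrow> fib_val (False # w) < fib (length w + 2)"
  using fib_valid_bound[of w] by simp

lemma compat_bound:
  assumes "fib_valid (a @ w)" "a \<noteq> []"
  shows "fib_val w < (if last a then fib (length w + 1) else fib (length w + 2))"
proof -
  have vw: "fib_valid w" using assms fib_valid_append by blast
  show ?thesis
  proof (cases "last a")
    case True
    show ?thesis
    proof (cases w)
      case Nil then show ?thesis using True by simp
    next
      case (Cons y w')
      then have "\<not> y" using assms True fib_valid_append by fastforce
      then show ?thesis using Cons vw fib_valid_bound[of w'] True by (auto simp: fib_valid_True_Cons)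
    qed
  next
    case False then show ?thesis using fib_valid_bound[OF vw] by simp
  qed
qed

lemma run_append: "run \<delta> q (a @ b) = (case run \<delta> q a of None \<Rightarrow> None | Some q' \<Rightarrow> run \<delta> q' b)"
  by (induction a arbitrary: q) (auto split: option.splits)



fun zrep :: "nat \<Rightarrow> nat \<Rightarrow> bool list" where
  "zrep 0 n = []"
| "zrep (Suc 0) n = (if n = 0 then [False] else [True])"
| "zrep (Suc (Suc L)) n = (if n < fib (L + 3) then False # zrep (Suc L) n
     else True # False # zrep L (n - fib (L + 3)))"

lemma zrep_length[simp]: "length (zrep L n) = L"
  by (induction L n rule: zrep.induct) auto

lemma zrep_props:
  "n < fib (L + 2) \<Longrightarrow> fib_valid (zrep L n) \<and> fib_val (zrep L n) = n
     \<and> (0 < L \<and> n < fib (L + 1) \<longrightarrow> hd (zrep L n) = False)"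
proof (induction L n rule: zrep.induct)
  case (1 n) then show ?case by simp
next
  case (2 n) then show ?case by (simp add: numeral_3_eq_3)
next
  case (3 L n)
  have f: "fib (L + 4) = fib (L + 3) + fib (L + 2)"
    using fib_plus_2[of "L + 2"] by (simp add: add.assoc numeral_eq_Suc)
  show ?case
  proof (cases "n < fib (L + 3)")
    case True
    then have "n < fib (Suc L + 2)" by (simp add: numeral_eq_Suc)
    from "3.IH"(1)[OF True this] True show ?thesis
      by (cases "zrep (Suc L) n") (auto simp: numeral_eq_Suc)
  next
    case False
    have "n - fib (L + 3) < fib (L + 2)" using "3.prems" False f by (simp add: numeral_eq_Suc)
    from "3.IH"(2)[OF False this] False show ?thesis
      by (auto simp: numeral_eq_Suc)
  qed
qed

lemma zrep_valid: "n < fib (L + 2) \<Longrightarrow> fib_valid (zrep L n)"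
  and zrep_val: "n < fib (L + 2) \<Longrightarrow> fib_val (zrep L n) = n"
  and zrep_hd: "n < fib (L + 1) \<Longrightarrow> 0 < L \<Longrightarrow> hd (zrep L n) = False"
proof -
  assume "n < fib (L + 2)" then show "fib_valid (zrep L n)" using zrep_props by blast
next
  assume "n < fib (L + 2)" then show "fib_val (zrep L n) = n" using zrep_props by blast
next
  assume a: "n < fib (L + 1)" "0 < L"
  have "fib (L + 1) \<le> fib (L + 2)" by (rule fib_mono) simp
  then show "hd (zrep L n) = False" using a zrep_props[of n L] by auto
qed

lemma prefix_mono:
  "length a = length b \<Longrightarrow> length w = length w' \<Longrightarrow> fib_valid (a @ w) \<Longrightarrow> fib_valid (b @ w')
   \<Longrightarrow> fib_val a < fib_val b \<Longrightarrow> fib_val (a @ w) < fib_val (b @ w')"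
proof (induction a arbitrary: b)
  case Nil then show ?case by simp
next
  case (Cons x a)
  then obtain y b' where b: "b = y # b'" by (cases b) auto
  have la: "length a = length b'" using Cons.prems b by simp
  have va: "fib_valid (a @ w)" using Cons.prems(3) fib_valid_tl by simp
  have vb: "fib_valid (b' @ w')" using Cons.prems(4) b fib_valid_tl by simp
  have vb': "fib_valid b'" using vb fib_valid_append by blast
  have len: "length (a @ w) = length (b' @ w')" using la Cons.prems(2) by simp
  show ?case
  proof (cases "x = y")
    case True
    then have "fib_val a < fib_val b'" using Cons.prems(5) b la by (cases y) simp_all
    from Cons.IH[OF la Cons.prems(2) va vb this] show ?thesis using b True len by simp
  next
    case False
    show ?thesis
    proof (cases y)
      case True
      then have "\<not> x" using False by simp
      then show ?thesis using fib_valid_bound[OF va] b True len by simp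
    next
      case f: False
      then have "x" using False by simp
      then have "fib_val (x # a) \<ge> fib (length a + 2)" by simp
      moreover have "fib_val b < fib (length a + 2)" using fib_valid_bound[OF vb'] b f la by simp
      ultimately show ?thesis using Cons.prems(5) by simp
    qed
  qed
qed

lemma val_inj:
  "length a = length b \<Longrightarrow> fib_valid a \<Longrightarrow> fib_valid b \<Longrightarrow> fib_val a = fib_val b \<Longrightarrow> a = b"
proof (induction a arbitrary: b)
  case Nil then show ?case by simp
next
  case (Cons x a)
  then obtain y b' where b: "b = y # b'" by (cases b) auto
  have la: "length a = length b'" using Cons.prems b by simp
  have va: "fib_valid a" using Cons.prems(2) fib_valid_tl by simp
  have vb: "fib_valid b'" using Cons.prems(3) b fib_valid_tl by simp
  show ?case
  proof (cases "x = y")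
    case True
    then have "fib_val a = fib_val b'" using Cons.prems(4) b la by (cases y) simp_all
    from Cons.IH[OF la va vb this] show ?thesis using b True by simp
  next
    case False
    show ?thesis
    proof (cases x)
      case True
      then show ?thesis using fib_valid_bound[OF vb] b False la Cons.prems(4) by simp
    next
      case f: False
      then show ?thesis using fib_valid_bound[OF va] b False la Cons.prems(4) by simp
    qed
  qed
qed



lemma valid_Z: "fib_valid a \<Longrightarrow> fib_valid (a @ replicate L False)"
proof -
  assume "fib_valid a"
  moreover have "fib_valid (replicate L False)" using fib_valid_replicate_False[of L "[]"] by simp
  moreover have "replicate L False \<noteq> [] \<Longrightarrow> hd (replicate L False) = False" by (cases L) auto
  ultimately show ?thesis using fib_valid_append by blast
qed

lemma cnt_lemma:
  assumes va: "fib_valid a" and vb: "fib_valid b" and len: "length a = length b" and ne: "a \<noteq> []"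
    and vab: "fib_val b = fib_val a + 1"
  shows "fib_val (b @ replicate L False) = fib_val (a @ replicate L False) + (if last a then fib (L+1) else fib (L+2))"
proof -
  define Z where "Z = replicate L False"
  define cnt where "cnt = (if last a then fib (L+1) else fib (L+2))"
  define k where "k = length a"
  have vaZ: "fib_valid (a @ Z)" and vbZ: "fib_valid (b @ Z)" using va vb valid_Z Z_def by auto
  have f12: "fib (L+1) \<le> fib (L+2)" by (rule fib_mono) simp
  have cpos: "cnt \<ge> 1" using fib_neq_0_nat[of "L+1"] fib_neq_0_nat[of "L+2"] by (simp add: cnt_def)
  have ge: "fib_val (b @ Z) \<ge> fib_val (a @ Z) + cnt"
  proof -
    define wm where "wm = zrep L (cnt - 1)"
    have c1: "cnt - 1 < fib (L + 2)" using cpos f12 by (auto simp: cnt_def)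
    have vwm: "fib_valid wm" and valwm: "fib_val wm = cnt - 1" using zrep_valid[OF c1] zrep_val[OF c1] wm_def by auto
    have "wm \<noteq> [] \<Longrightarrow> last a \<Longrightarrow> hd wm = False"
    proof -
      assume "wm \<noteq> []" "last a"
      then have "0 < L" using wm_def by (cases L) auto
      have "cnt - 1 < fib (L+1)" using cpos \<open>last a\<close> by (auto simp: cnt_def)
      note \<open>0 < L\<close> this
      then show ?thesis using zrep_hd wm_def by blast
    qed
    then have vawm: "fib_valid (a @ wm)" using va vwm fib_valid_append by blast
    have "fib_val (a @ wm) < fib_val (b @ Z)"
      by (rule prefix_mono[OF len _ vawm vbZ]) (auto simp: wm_def Z_def vab)
    moreover have "fib_val (a @ wm) = fib_val (a @ Z) + (cnt - 1)"
      using fib_val_append[of a wm] valwm by (simp add: wm_def Z_def)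
    ultimately show ?thesis using cpos by simp
  qed
  define n where "n = fib_val (a @ Z) + cnt"
  have nb: "n < fib (k + L + 2)" using ge fib_valid_bound[OF vbZ] len by (simp add: n_def k_def Z_def)
  define v where "v = zrep (k + L) n"
  have vv: "fib_valid v" and valv: "fib_val v = n" and lv: "length v = k + L"
    using zrep_valid[OF nb] zrep_val[OF nb] by (auto simp: v_def)
  define b' where "b' = take k v"
  define w where "w = drop k v"
  have vsplit: "v = b' @ w" by (simp add: b'_def w_def)
  have lb': "length b' = k" and lw: "length w = L" using lv by (auto simp: b'_def w_def)
  have vb': "fib_valid b'" using vv vsplit fib_valid_append by blast
  have le: "fib_val (b @ Z) \<le> n"
  proof (cases "fib_val b' < fib_val a")
    case True
    have "fib_val (b' @ w) < fib_val (a @ Z)"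
      by (rule prefix_mono[OF _ _ _ vaZ True]) (use lb' lw vv vsplit in \<open>auto simp: k_def Z_def\<close>)
    then show ?thesis using valv vsplit n_def by simp
  next
    case False
    show ?thesis
    proof (cases "fib_val b' = fib_val a")
      case True
      then have "b' = a" using val_inj[OF _ vb' va] lb' k_def by simp
      then have "fib_val w < (if last a then fib (length w + 1) else fib (length w + 2))"
        using compat_bound[of a w] vv vsplit ne by simp
      then have "fib_val w < cnt" unfolding lw cnt_def .
      moreover have "fib_val v = fib_val (a @ Z) + fib_val w"
        using fib_val_append[of a w] vsplit \<open>b' = a\<close> lw Z_def by simp
      ultimately show ?thesis using valv n_def by simp
    next
      case F2: False
      show ?thesis
      proof (cases "fib_val b' = fib_val b")
        case True
        then have "b' = b" using val_inj[OF _ vb' vb] lb' k_def len by simp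
        then have "fib_val v = fib_val (b @ Z) + fib_val w"
          using fib_val_append[of b w] vsplit lw Z_def by simp
        then show ?thesis using valv by simp
      next
        case F3: False
        then have lt: "fib_val b < fib_val b'" using False F2 vab by simp
        have "fib_val (b @ Z) < fib_val (b' @ w)"
          by (rule prefix_mono[OF _ _ vbZ _ lt]) (use lb' lw vv vsplit len in \<open>auto simp: k_def Z_def\<close>)
        then show ?thesis using valv vsplit ge n_def by simp
      qed
    qed
  qed
  show ?thesis using ge le by (simp add: n_def Z_def cnt_def)
qed



definition aw :: "nat \<Rightarrow> bool list \<Rightarrow> bool list" where
  "aw r0 p = False # take (length p + 1) (replicate (r0+1) False @ p)"
definition uw :: "nat \<Rightarrow> bool list \<Rightarrow> bool list" where
  "uw r0 p = drop (length p + 1) (replicate (r0+1) False @ p)"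
definition ap :: "nat \<Rightarrow> bool list \<Rightarrow> bool list" where
  "ap r0 p = zrep (length (aw r0 p)) (fib_val (aw r0 p) + 1)"
definition Rf :: "(nat \<Rightarrow> 'o) \<Rightarrow> nat \<Rightarrow> bool list \<Rightarrow> bool list \<Rightarrow> 'o option" where
  "Rf h c p = (\<lambda>s. if fib_valid (p @ s) then Some (h (fib_val (p @ s) + c)) else None)"
definition Sig :: "('q \<Rightarrow> bool \<Rightarrow> 'q option) \<Rightarrow> 'q \<Rightarrow> nat \<Rightarrow> bool list \<Rightarrow> 'q option \<times> 'q option \<times> bool list \<times> bool" where
  "Sig \<delta> q0 r0 p = (run \<delta> q0 (aw r0 p), run \<delta> q0 (ap r0 p), uw r0 p, last (aw r0 p))"
definition Phi :: "('q \<Rightarrow> bool \<Rightarrow> 'q option) \<Rightarrow> ('q \<Rightarrow> 'o) \<Rightarrow> nat \<Rightarrow> 'q option \<times> 'q option \<times> bool list \<times> bool \<Rightarrow> bool list \<Rightarrow> 'o option" where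
  "Phi \<delta> \<tau> c \<sigma> s = (case \<sigma> of (X, Y, u, la) \<Rightarrow>
     if fib_valid (u @ s) \<and> \<not> (la \<and> hd u) then
       (let L = length (u @ s); N = fib_val (u @ s) + c; cnt = (if la then fib (L+1) else fib (L+2)) in
        if N < cnt then Some (\<tau> (the (run \<delta> (the X) (zrep L N))))
        else Some (\<tau> (the (run \<delta> (the Y) (zrep L (N - cnt))))))
     else None)"

lemma aw_uw: "aw r0 p @ uw r0 p = replicate (r0+2) False @ p"
proof -
  have "aw r0 p @ uw r0 p = False # (replicate (r0+1) False @ p)"
    by (simp only: aw_def uw_def append_Cons append_take_drop_id)
  then show ?thesis by simp
qed

lemma uw_length: "length (uw r0 p) = r0"
  by (simp add: uw_def)

lemma aw_length: "length (aw r0 p) = length p + 2"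
  by (simp add: aw_def)

lemma aw_valid: "fib_valid p \<Longrightarrow> fib_valid (aw r0 p)"
  using aw_uw[of r0 p] fib_valid_replicate_False[of "r0+2" p] fib_valid_append[of "aw r0 p" "uw r0 p"] by simp

lemma ap_valid: assumes "fib_valid p" shows "fib_valid (ap r0 p)"
proof -
  define a where "a = aw r0 p"
  have va: "fib_valid a" using aw_valid assms a_def by simp
  obtain a' where a': "a = False # a'" by (simp add: a_def aw_def)
  have la: "length a = length p + 2" using aw_length a_def by simp
  have vab1: "fib_val a + 1 < fib (length a + 2)"
  proof -
    have "fib_val a = fib_val a'" using a' by simp
    moreover have "fib_val a' < fib (length a' + 2)"
      using fib_valid_bound fib_valid_tl va a' by blast
    moreover have "length a' + 1 = length a" using a' by simp
    moreover have "fib (length a + 2) = fib (length a + 1) + fib (length a)"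
      using fib_plus_2[of "length a"] by simp
    moreover have "fib (length a) > 0" using la fib_neq_0_nat by simp
    moreover have "fib (Suc (length a)) = fib (length a) + fib (length a')" using a' by simp
    ultimately show ?thesis by simp
  qed
  show ?thesis using zrep_valid[OF vab1] by (simp add: ap_def a_def)
qed

lemma gen_run: "generates \<delta> q0 \<tau> h \<Longrightarrow> fib_valid x \<Longrightarrow> \<exists>q. run \<delta> q0 x = Some q \<and> \<tau> q = h (fib_val x)"
  by (simp add: generates_def)

lemma gen_app:
  assumes g: "generates \<delta> q0 \<tau> h" and v: "fib_valid (a @ w)" and r: "run \<delta> q0 a = Some qa"
  shows "\<tau> (the (run \<delta> qa w)) = h (fib_val (a @ w))"
proof -
  obtain q where "run \<delta> q0 (a @ w) = Some q" "\<tau> q = h (fib_val (a @ w))" using gen_run[OF g v] by blast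
  moreover have "run \<delta> q0 (a @ w) = run \<delta> qa w" using r by (simp add: run_append)
  ultimately show ?thesis by simp
qed

lemma main_det:
  assumes gen: "generates \<delta> q0 \<tau> h" and r0: "2 \<le> r0" and cf: "c < fib (r0+1)" and vp: "fib_valid p"
  shows "Rf h c p s = Phi \<delta> \<tau> c (Sig \<delta> q0 r0 p) s"
proof -
  define a where "a = aw r0 p"
  define u where "u = uw r0 p"
  define b where "b = ap r0 p"
  have au: "a @ u = replicate (r0+2) False @ p" using aw_uw a_def u_def by simp
  have lu: "length u = r0" using uw_length u_def by simp
  have la: "length a = length p + 2" using aw_length a_def by simp
  have une: "u \<noteq> []" using lu r0 by auto
  have ane: "a \<noteq> []" using la by auto
  have vau: "fib_valid (a @ u)" using au vp by simp
  have va: "fib_valid a" using vau fib_valid_append by blast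
  have e1: "fib_valid (p @ s) = fib_valid (a @ (u @ s))"
    using au fib_valid_replicate_False[of "r0+2" "p @ s"] by (metis append.assoc)
  have e2: "fib_val (p @ s) = fib_val (a @ (u @ s))"
    using au fib_val_replicate_False[of "r0+2" "p @ s"] by (metis append.assoc)
  have hus: "hd (u @ s) = hd u" using une by simp
  have e3: "fib_valid (a @ (u @ s)) \<longleftrightarrow> fib_valid (u @ s) \<and> \<not> (last a \<and> hd u)"
    using fib_valid_append[of a "u @ s"] va ane une hus by auto
  have sig: "Sig \<delta> q0 r0 p = (run \<delta> q0 a, run \<delta> q0 b, u, last a)"
    by (simp add: Sig_def a_def b_def u_def)
  obtain qa where qa: "run \<delta> q0 a = Some qa" using gen_run[OF gen va] by blast
  show ?thesis
  proof (cases "fib_valid (u @ s) \<and> \<not> (last a \<and> hd u)")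
    case False
    then show ?thesis using e1 e3 sig by (auto simp: Rf_def Phi_def)
  next
    case True
    then have vaus: "fib_valid (a @ (u @ s))" using e3 by simp
    define L where "L = length (u @ s)"
    define N where "N = fib_val (u @ s) + c"
    define cnt where "cnt = (if last a then fib (L+1) else fib (L+2))"
    define Z where "Z = replicate L False"
    have Lge: "r0 \<le> L" "1 \<le> L" using lu r0 by (auto simp: L_def)
    have f12: "fib (L+1) \<le> fib (L+2)" by (rule fib_mono) simp
    have cL: "c < fib (L+1)" using cf fib_mono[of "r0+1" "L+1"] Lge by simp
    have bnd: "fib_val (u @ s) < cnt"
      unfolding cnt_def L_def by (rule compat_bound[OF vaus ane])
    have vals: "fib_val (p @ s) + c = fib_val (a @ Z) + N"
      using e2 fib_val_append[of a "u @ s"] by (simp add: N_def Z_def L_def)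
    have rhs: "Phi \<delta> \<tau> c (Sig \<delta> q0 r0 p) s =
        (if N < cnt then Some (\<tau> (the (run \<delta> qa (zrep L N))))
         else Some (\<tau> (the (run \<delta> (the (run \<delta> q0 b)) (zrep L (N - cnt))))))"
      using True sig qa by (simp add: Phi_def L_def N_def cnt_def Let_def)
    have lhs: "Rf h c p s = Some (h (fib_val (a @ Z) + N))"
      using True e1 e3 vals by (simp add: Rf_def)
    show ?thesis
    proof (cases "N < cnt")
      case True
      define w where "w = zrep L N"
      have Nb: "N < fib (L + 2)" using True f12 by (auto simp: cnt_def split: if_splits)
      have vw: "fib_valid w" and valw: "fib_val w = N" using zrep_valid[OF Nb] zrep_val[OF Nb] w_def by auto
      have "last a \<Longrightarrow> hd w = False"
        using zrep_hd[of N L] True Lge by (simp add: w_def cnt_def)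
      then have vaw: "fib_valid (a @ w)" using va vw fib_valid_append by blast
      have "fib_val (a @ w) = fib_val (a @ Z) + N"
        using fib_val_append[of a w] valw by (simp add: w_def Z_def)
      then have "\<tau> (the (run \<delta> qa w)) = h (fib_val (a @ Z) + N)"
        using gen_app[OF gen vaw qa] by simp
      then show ?thesis using lhs rhs True w_def by simp
    next
      case False
      define w where "w = zrep L (N - cnt)"
      have Nc: "N - cnt < fib (L + 1)" using bnd cL False by (simp add: N_def)
      have Nb: "N - cnt < fib (L + 2)" using Nc f12 by simp
      have vw: "fib_valid w" and valw: "fib_val w = N - cnt" using zrep_valid[OF Nb] zrep_val[OF Nb] w_def by auto
      have hw: "hd w = False" using zrep_hd[OF Nc] Lge by (simp add: w_def)
      have lb: "length b = length a" by (simp add: b_def ap_def a_def)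
      have vab1: "fib_val a + 1 < fib (length a + 2)"
      proof -
        obtain a' where a': "a = False # a'" by (simp add: a_def aw_def)
        have "fib_val a = fib_val a'" using a' by simp
        moreover have "fib_val a' < fib (length a' + 2)"
          using fib_valid_bound fib_valid_tl va a' by blast
        moreover have "length a' + 1 = length a" using a' by simp
        moreover have "fib (length a + 2) = fib (length a + 1) + fib (length a)"
          using fib_plus_2[of "length a"] by simp
        moreover have "fib (length a) > 0" using la fib_neq_0_nat by simp
        moreover have "fib (Suc (length a)) = fib (length a) + fib (length a')" using a' by simp
        ultimately show ?thesis by simp
      qed
      have vb: "fib_valid b" and valb: "fib_val b = fib_val a + 1"
        using zrep_valid[OF vab1] zrep_val[OF vab1] by (auto simp: b_def ap_def a_def)
      obtain qb where qb: "run \<delta> q0 b = Some qb" using gen_run[OF gen vb] by blast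
      have vbw: "fib_valid (b @ w)" using vb vw hw fib_valid_append by blast
      have c1: "fib_val (b @ Z) = fib_val (a @ Z) + cnt"
        using cnt_lemma[OF va vb lb[symmetric] ane valb, of L] by (simp add: Z_def cnt_def)
      have "fib_val (b @ w) = fib_val (a @ Z) + N"
        using fib_val_append[of b w] valw c1 False by (simp add: w_def Z_def)
      then have "\<tau> (the (run \<delta> qb w)) = h (fib_val (a @ Z) + N)"
        using gen_app[OF gen vbw qb] by simp
      then show ?thesis using lhs rhs False w_def qb by simp
    qed
  qed
qed



lemma run_in: "(\<forall>q\<in>Q. \<forall>a q'. \<delta> q a = Some q' \<longrightarrow> q' \<in> Q) \<Longrightarrow> q \<in> Q \<Longrightarrow> run \<delta> q x = Some q' \<Longrightarrow> q' \<in> Q"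
  by (induction x arbitrary: q) (auto split: option.splits)

lemma to_nat_dfao:
  fixes Q :: "'a set"
  assumes d: "fib_dfao Q \<delta> q0" and g: "generates \<delta> q0 \<tau> h"
  shows "\<exists>(Q'::nat set) \<delta>' q0' (\<tau>'::nat \<Rightarrow> 'o). fib_dfao Q' \<delta>' q0' \<and> card Q' = card Q \<and> generates \<delta>' q0' \<tau>' h"
proof -
  have fin: "finite Q" and q0Q: "q0 \<in> Q" and cl: "\<forall>q\<in>Q. \<forall>a q'. \<delta> q a = Some q' \<longrightarrow> q' \<in> Q"
    and loop: "\<delta> q0 False = Some q0" using d by (auto simp: fib_dfao_def)
  obtain f where bf: "bij_betw f Q {0..<card Q}" using ex_bij_betw_finite_nat[OF fin] by blast
  then have inj: "inj_on f Q" by (simp add: bij_betw_def)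
  define g where "g = inv_into Q f"
  have gf: "\<And>q. q \<in> Q \<Longrightarrow> g (f q) = q" using inj by (simp add: g_def)
  define \<delta>' where "\<delta>' = (\<lambda>i a. map_option f (\<delta> (g i) a))"
  define \<tau>' where "\<tau>' = (\<lambda>i. \<tau> (g i))"
  have runeq: "q \<in> Q \<Longrightarrow> run \<delta>' (f q) x = map_option f (run \<delta> q x)" for q x
  proof (induction x arbitrary: q)
    case Nil then show ?case by simp
  next
    case (Cons a x)
    show ?case
    proof (cases "\<delta> q a")
      case None then show ?thesis using Cons.prems gf by (simp add: \<delta>'_def)
    next
      case (Some q1)
      then have "q1 \<in> Q" using cl Cons.prems by blast
      then show ?thesis using Some Cons.prems Cons.IH gf by (simp add: \<delta>'_def)
    qed
  qed
  have "fib_dfao (f ` Q) \<delta>' (f q0)"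
    unfolding fib_dfao_def
  proof (intro conjI ballI allI impI)
    show "finite (f ` Q)" using fin by simp
    show "f q0 \<in> f ` Q" using q0Q by simp
    show "\<delta>' (f q0) False = Some (f q0)" using loop gf q0Q by (simp add: \<delta>'_def)
  next
    fix i a q' assume "i \<in> f ` Q" "\<delta>' i a = Some q'"
    then obtain q q1 where "q \<in> Q" "i = f q" "\<delta> q a = Some q1" "q' = f q1" using gf by (auto simp: \<delta>'_def)
    then show "q' \<in> f ` Q" using cl by blast
  qed
  moreover have "card (f ` Q) = card Q" using card_image[OF inj] .
  moreover have "generates \<delta>' (f q0) \<tau>' h"
    unfolding generates_def
  proof (intro allI impI)
    fix x assume "fib_valid x"
    then obtain q where q: "run \<delta> q0 x = Some q" "\<tau> q = h (fib_val x)" using g by (auto simp: generates_def)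
    then have "q \<in> Q" using run_in[OF cl q0Q] by blast
    then show "\<exists>q. run \<delta>' (f q0) x = Some q \<and> \<tau>' q = h (fib_val x)"
      using runeq[OF q0Q, of x] q gf by (simp add: \<tau>'_def)
  qed
  ultimately show ?thesis by blast
qed

lemma pow_fib: "2 ^ n \<le> fib (2 * n + 1)"
proof (induction n)
  case 0 then show ?case by simp
next
  case (Suc n)
  have "fib (2 * Suc n + 1) = fib (2 * n + 2) + fib (2 * n + 1)"
    using fib_plus_2[of "2*n+1"] by simp
  moreover have "fib (2 * n + 1) \<le> fib (2 * n + 2)" by (rule fib_mono) simp
  ultimately show ?case using Suc by simp
qed

lemma exists_pow: "\<exists>n. c < (2::nat) ^ n \<and> 2 ^ n \<le> 2 * (c + 1)"
proof (induction c)
  case 0 then show ?case by (intro exI[of _ 0]) simp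
next
  case (Suc c)
  then obtain n where n: "c < 2 ^ n" "2 ^ n \<le> 2 * (c + 1)" by blast
  show ?case
  proof (cases "Suc c < 2 ^ n")
    case True then show ?thesis using n by (intro exI[of _ n]) simp
  next
    case False
    then have "Suc c = 2 ^ n" using n by simp
    then show ?thesis by (intro exI[of _ "Suc n"]) simp
  qed
qed

lemma shift_dfao:
  fixes Q :: "nat set" and \<tau> :: "nat \<Rightarrow> 'o"
  assumes d: "fib_dfao Q \<delta> q0" and g: "generates \<delta> q0 \<tau> h"
  shows "\<exists>(Q'::nat set) \<delta>' q0' (\<tau>'::nat \<Rightarrow> 'o).
        fib_dfao Q' \<delta>' q0' \<and> card Q' \<le> 32 * (card Q)^2 * (c+1)^2 \<and>
        generates \<delta>' q0' \<tau>' (\<lambda>i. h (i + c))"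
proof -
  have fin: "finite Q" and q0Q: "q0 \<in> Q" and cl: "\<forall>q\<in>Q. \<forall>a q'. \<delta> q a = Some q' \<longrightarrow> q' \<in> Q"
    using d by (auto simp: fib_dfao_def)
  obtain n where n: "c < 2 ^ n" "2 ^ n \<le> 2 * (c + 1)" using exists_pow by blast
  define r0 where "r0 = 2 * n + 2"
  have r0: "2 \<le> r0" by (simp add: r0_def)
  have cf: "c < fib (r0 + 1)"
  proof -
    have "fib (2 * n + 1) \<le> fib (r0 + 1)" by (rule fib_mono) (simp add: r0_def)
    then show ?thesis using pow_fib[of n] n by simp
  qed
  define V where "V = {p. fib_valid p}"
  define RQ where "RQ = Rf h c ` V"
  define d2 where "d2 = (\<lambda>(R :: bool list \<Rightarrow> 'o option) a. if R [a] = None then None else Some (\<lambda>s. R (a # s)))"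
  define t2 where "t2 = (\<lambda>R :: bool list \<Rightarrow> 'o option. the (R []))"
  have step: "fib_valid (p @ [a]) \<Longrightarrow> d2 (Rf h c p) a = Some (Rf h c (p @ [a]))" for p a
  proof -
    assume "fib_valid (p @ [a])"
    moreover have "(\<lambda>s. Rf h c p (a # s)) = Rf h c (p @ [a])"
      unfolding Rf_def by (rule ext) simp
    ultimately show ?thesis by (simp add: d2_def Rf_def)
  qed
  have stepN: "\<not> fib_valid (p @ [a]) \<Longrightarrow> d2 (Rf h c p) a = None" for p a
    by (simp add: d2_def Rf_def)
  have runR: "fib_valid (p @ x) \<Longrightarrow> run d2 (Rf h c p) x = Some (Rf h c (p @ x))" for p x
  proof (induction x arbitrary: p)
    case Nil then show ?case by simp
  next
    case (Cons a x)
    have "fib_valid (p @ [a])" using Cons.prems fib_valid_append[of "p @ [a]" x] by simp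
    then show ?case using step Cons.IH[of "p @ [a]"] Cons.prems by simp
  qed
  define S where "S = (Some ` Q) \<times> (Some ` Q) \<times> {u :: bool list. length u = r0} \<times> (UNIV :: bool set)"
  have finS: "finite S" using fin finite_lists_length_eq[of "UNIV :: bool set" r0] by (simp add: S_def)
  have cardS: "card S = card Q * card Q * 2 ^ r0 * 2"
    using card_lists_length_eq[of "UNIV :: bool set" r0]
    by (simp add: S_def card_cartesian_product card_image)
  have inQ: "fib_valid x \<Longrightarrow> run \<delta> q0 x \<in> Some ` Q" for x
  proof -
    assume "fib_valid x"
    then obtain q where "run \<delta> q0 x = Some q" using gen_run[OF g] by blast
    moreover have "q \<in> Q" using run_in[OF cl q0Q] calculation by blast
    ultimately show ?thesis by simp
  qed
  have sigS: "Sig \<delta> q0 r0 ` V \<subseteq> S"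
  proof
    fix \<sigma> assume "\<sigma> \<in> Sig \<delta> q0 r0 ` V"
    then obtain p where p: "fib_valid p" "\<sigma> = Sig \<delta> q0 r0 p" by (auto simp: V_def)
    then show "\<sigma> \<in> S" using inQ[OF aw_valid[OF p(1)]] inQ[OF ap_valid[OF p(1)]] uw_length[of r0 p]
      by (simp add: S_def Sig_def)
  qed
  have RQeq: "RQ = Phi \<delta> \<tau> c ` (Sig \<delta> q0 r0 ` V)"
  proof -
    have "\<And>p. p \<in> V \<Longrightarrow> Rf h c p = Phi \<delta> \<tau> c (Sig \<delta> q0 r0 p)"
      using main_det[OF g r0 cf] by (auto simp: V_def)
    then show ?thesis unfolding RQ_def image_image by (rule image_cong[OF refl])
  qed
  have finSV: "finite (Sig \<delta> q0 r0 ` V)" using finite_subset[OF sigS finS] .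
  have cardRQ: "card RQ \<le> card S"
    using card_image_le[OF finSV, of "Phi \<delta> \<tau> c"] card_mono[OF finS sigS] RQeq by simp
  have dR: "fib_dfao RQ d2 (Rf h c [])"
    unfolding fib_dfao_def
  proof (intro conjI ballI allI impI)
    show "finite RQ" using RQeq finSV by simp
    show "Rf h c [] \<in> RQ" by (simp add: RQ_def V_def)
    have "Rf h c [False] = Rf h c []" unfolding Rf_def by (rule ext) simp
    then show "d2 (Rf h c []) False = Some (Rf h c [])" using step[of "[]" False] by simp
  next
    fix R a R' assume "R \<in> RQ" "d2 R a = Some R'"
    then obtain p where p: "R = Rf h c p" by (auto simp: RQ_def)
    then have "fib_valid (p @ [a])" using stepN \<open>d2 R a = Some R'\<close> by fastforce
    then show "R' \<in> RQ" using step p \<open>d2 R a = Some R'\<close> by (auto simp: RQ_def V_def)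
  qed
  have gR: "generates d2 (Rf h c []) t2 (\<lambda>i. h (i + c))"
    unfolding generates_def
  proof (intro allI impI)
    fix x assume "fib_valid x"
    then show "\<exists>q. run d2 (Rf h c []) x = Some q \<and> t2 q = h (fib_val x + c)"
      using runR[of "[]" x] by (simp add: t2_def Rf_def)
  qed
  obtain Q' :: "nat set" and \<delta>' q0' and \<tau>' :: "nat \<Rightarrow> 'o" where
    R: "fib_dfao Q' \<delta>' q0'" "card Q' = card RQ" "generates \<delta>' q0' \<tau>' (\<lambda>i. h (i + c))"
    using to_nat_dfao[OF dR gR] by blast
  have "card Q' \<le> card Q * card Q * 2 ^ r0 * 2" using R(2) cardRQ cardS by simp
  also have "\<dots> = 8 * (card Q)^2 * (2 ^ n)^2"
  proof -
    have "(2::nat) ^ r0 = 4 * (2 ^ n)^2" by (simp add: r0_def power_add power_mult[symmetric] mult.commute)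
    then show ?thesis by (simp add: power2_eq_square)
  qed
  also have "\<dots> \<le> 8 * (card Q)^2 * (2 * (c+1))^2"
    using n(2) by (intro mult_le_mono2 power_mono) auto
  also have "\<dots> = 32 * (card Q)^2 * (c+1)^2" by (simp add: power2_eq_square algebra_simps)
  finally show ?thesis using R by blast
qed


theorem theorem13:
  shows "\<exists>K::nat. \<forall>(Q::nat set) \<delta> q0 (\<tau>::nat \<Rightarrow> 'o) h m (c::nat).
     fib_dfao Q \<delta> q0 \<and> card Q = m \<and> generates \<delta> q0 \<tau> h \<longrightarrow>
     (\<exists>(Q'::nat set) \<delta>' q0' (\<tau>'::nat \<Rightarrow> 'o).
        fib_dfao Q' \<delta>' q0' \<and> card Q' \<le> K * m^2 * (c+1)^2 \<and>
        generates \<delta>' q0' \<tau>' (\<lambda>i. h (i + c)))"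
  using shift_dfao by blast

end
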